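(* Let $G$, $P$, $n$, $\alpha$, $n'$, $\zeta$, $\mathcal C_{\mathrm{pool}}$ and $P(\mathbf c)$ be as in the context, and let $\bar P_{\max}=\max_{\mathbf c\in\mathcal C_{\mathrm{pool}}}P(\mathbf c)$. Then $$\bar P_{\max}\le\frac{2^{-2\alpha n\zeta\sum_{e\in E}\log_2 p(\tau(e)\mid\sigma(e))}}{|\mathcal C_{\mathrm{pool}}|}.$$
   Context: $G=(V,E,L)$ is a deterministic, lossless, primitive labeled directed graph over a finite alphabet $\Sigma$; edge $e$ has initial vertex $\sigma(e)$, terminal vertex $\tau(e)$, label $L(e)$. $P$ is a probability mass function on $E$ with $P(e)>0$ for all $e$, stationary: with $\pi(u)=\sum_{e:\sigma(e)=u}P(e)$, $\pi(u)=\sum_{e:\tau(e)=u}P(e)$. Write $p(\tau(e)\mid\sigma(e))=P(e)/\pi(\sigma(e))$; $P_{\min}=\min_eP(e)$. $n$ is a positive integer with $nP(e)\in\mathbb Z$ for all $e$; $\alpha\in(0,1)$, $n'=\lfloor\alpha n\rfloor$, $0<\zeta<\frac{1-\alpha}{\alpha}P_{\min}$, $v_{\mathrm{root}}\in V$ fixed. $\mathcal W$ is the set of paths $\mathbf w=(e_1,\dots,e_{n'})$ with $\sigma(e_1)=v_{\mathrm{root}}$ and $|S_{\mathbf w}(e)/n'-P(e)|<\zeta$ for all $e$, where $S_{\mathbf w}(e)$ counts occurrences of $e$ in $\mathbf w$. For $\mathbf w\in\mathcal W$ ending at $v_{\mathrm{end}}$, the multigraph with $nP(e)-S_{\mathbf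 w}(e)>0$ copies of each $e$ has an Eulerian path from $v_{\mathrm{end}}$ to $v_{\mathrm{root}}$; $\Phi(\mathbf w)$ is the lexicographically first. $\mathcal C_{\mathrm{pool}}=\{L(\mathbf w\|\Phi(\mathbf w)):\mathbf w\in\mathcal W\}$; each codeword $\mathbf c$ has a unique prefix $\mathbf w$, and $P(\mathbf c)=\prod_{i=1}^{n'}p(\tau(e_i)\mid\sigma(e_i))$, the probability that a length-$n'$ random walk governed by $P$ from $v_{\mathrm{root}}$ (choosing edge $e$ out of $u$ with probability $P(e)/\pi(u)$) equals that prefix. *)

theory Defs
  imports Complex_Main
begin

definition is_walk :: "'e set \<Rightarrow> ('e \<Rightarrow> 'v) \<Rightarrow> ('e \<Rightarrow> 'v) \<Rightarrow> 'v \<Rightarrow> 'v \<Rightarrow> 'e list \<Rightarrow> bool" where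
  "is_walk E sg tu u v q \<longleftrightarrow>
     set q \<subseteq> E \<and> (\<forall>i. Suc i < length q \<longrightarrow> tu (q ! i) = sg (q ! Suc i)) \<and>
     (q = [] \<longrightarrow> u = v) \<and> (q \<noteq> [] \<longrightarrow> sg (hd q) = u \<and> tu (last q) = v)"

definition deterministic :: "'e set \<Rightarrow> ('e \<Rightarrow> 'v) \<Rightarrow> ('e \<Rightarrow> 'a) \<Rightarrow> bool" where
  "deterministic E sg L \<longleftrightarrow> (\<forall>e1\<in>E. \<forall>e2\<in>E. sg e1 = sg e2 \<and> L e1 = L e2 \<longrightarrow> e1 = e2)"

definition lossless :: "'e set \<Rightarrow> ('e \<Rightarrow> 'v) \<Rightarrow> ('e \<Rightarrow> 'v) \<Rightarrow> ('e \<Rightarrow> 'a) \<Rightarrow> bool" where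
  "lossless E sg tu L \<longleftrightarrow>
     (\<forall>u v p q. is_walk E sg tu u v p \<and> is_walk E sg tu u v q \<and> p \<noteq> q \<longrightarrow> map L p \<noteq> map L q)"

text \<open>Primitive: some power of the adjacency matrix is entrywise positive.\<close>
definition primitive :: "'v set \<Rightarrow> 'e set \<Rightarrow> ('e \<Rightarrow> 'v) \<Rightarrow> ('e \<Rightarrow> 'v) \<Rightarrow> bool" where
  "primitive V E sg tu \<longleftrightarrow>
     (\<exists>k>0. \<forall>u\<in>V. \<forall>v\<in>V. \<exists>q. length q = k \<and> is_walk E sg tu u v q)"

definition stat_pi :: "'e set \<Rightarrow> ('e \<Rightarrow> 'v) \<Rightarrow> ('e \<Rightarrow> real) \<Rightarrow> 'v \<Rightarrow> real" where
  "stat_pi E sg P u = (\<Sum>e\<in>{e\<in>E. sg e = u}. P e)"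

text \<open>p(tau(e) | sigma(e)) = P(e) / pi(sigma(e)).\<close>
definition cond_prob :: "'e set \<Rightarrow> ('e \<Rightarrow> 'v) \<Rightarrow> ('e \<Rightarrow> real) \<Rightarrow> 'e \<Rightarrow> real" where
  "cond_prob E sg P e = P e / stat_pi E sg P (sg e)"

definition walk_end :: "('e \<Rightarrow> 'v) \<Rightarrow> 'v \<Rightarrow> 'e list \<Rightarrow> 'v" where
  "walk_end tu v0 w = (if w = [] then v0 else tu (last w))"

definition typical_walks ::
  "'e set \<Rightarrow> ('e \<Rightarrow> 'v) \<Rightarrow> ('e \<Rightarrow> 'v) \<Rightarrow> ('e \<Rightarrow> real) \<Rightarrow> 'v \<Rightarrow> nat \<Rightarrow> real \<Rightarrow> 'e list set" where
  "typical_walks E sg tu P vroot n' \<zeta> =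
     {w. length w = n' \<and> (\<exists>v. is_walk E sg tu vroot v w) \<and>
         (\<forall>e\<in>E. \<bar>real (count_list w e) / real n' - P e\<bar> < \<zeta>)}"

text \<open>q is an Eulerian path from the end of w to vroot in the multigraph having
  n P(e) - S_w(e) copies of each edge e.\<close>
definition euler_completion ::
  "'e set \<Rightarrow> ('e \<Rightarrow> 'v) \<Rightarrow> ('e \<Rightarrow> 'v) \<Rightarrow> ('e \<Rightarrow> real) \<Rightarrow> nat \<Rightarrow> 'v \<Rightarrow> 'e list \<Rightarrow> 'e list \<Rightarrow> bool" where
  "euler_completion E sg tu P n vroot w q \<longleftrightarrow>
     is_walk E sg tu (walk_end tu vroot w) vroot q \<and>
     (\<forall>e\<in>E. real (count_list q e) = real n * P e - real (count_list w e))"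

definition Phi ::
  "'e set \<Rightarrow> ('e \<Rightarrow> 'v) \<Rightarrow> ('e \<Rightarrow> 'v) \<Rightarrow> ('e \<Rightarrow> 'a::linorder) \<Rightarrow> ('e \<Rightarrow> real) \<Rightarrow> nat \<Rightarrow> 'v
     \<Rightarrow> 'e list \<Rightarrow> 'e list" where
  "Phi E sg tu L P n vroot w =
     (THE q. euler_completion E sg tu P n vroot w q \<and>
        (\<forall>q'. euler_completion E sg tu P n vroot w q' \<longrightarrow> lexordp_eq (map L q) (map L q')))"

definition C_pool ::
  "'e set \<Rightarrow> ('e \<Rightarrow> 'v) \<Rightarrow> ('e \<Rightarrow> 'v) \<Rightarrow> ('e \<Rightarrow> 'a::linorder) \<Rightarrow> ('e \<Rightarrow> real) \<Rightarrow> nat \<Rightarrow> nat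
     \<Rightarrow> real \<Rightarrow> 'v \<Rightarrow> 'a list set" where
  "C_pool E sg tu L P n n' \<zeta> vroot =
     (\<lambda>w. map L (w @ Phi E sg tu L P n vroot w)) ` typical_walks E sg tu P vroot n' \<zeta>"

definition code_prob ::
  "'e set \<Rightarrow> ('e \<Rightarrow> 'v) \<Rightarrow> ('e \<Rightarrow> 'v) \<Rightarrow> ('e \<Rightarrow> 'a::linorder) \<Rightarrow> ('e \<Rightarrow> real) \<Rightarrow> nat \<Rightarrow> nat
     \<Rightarrow> real \<Rightarrow> 'v \<Rightarrow> 'a list \<Rightarrow> real" where
  "code_prob E sg tu L P n n' \<zeta> vroot c =
     prod_list (map (cond_prob E sg P)
       (THE w. w \<in> typical_walks E sg tu P vroot n' \<zeta> \<and> map L (w @ Phi E sg tu L P n vroot w) = c))"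

end

theory Submission
  imports Defs
begin
lemma is_walk_Cons: "is_walk E sg tu u v (e#w) \<longleftrightarrow> e \<in> E \<and> sg e = u \<and> is_walk E sg tu (tu e) v w"
  unfolding is_walk_def
  apply (cases w)
   apply auto[1]
  apply (auto simp: nth_Cons split: nat.splits)
  done

lemma is_walk_Nil: "is_walk E sg tu u v [] \<longleftrightarrow> u = v"
  unfolding is_walk_def by auto

lemma walk_det:
  assumes "deterministic E sg L"
  shows "is_walk E sg tu u v1 w1 \<Longrightarrow> is_walk E sg tu u v2 w2 \<Longrightarrow> map L w1 = map L w2 \<Longrightarrow> w1 = w2"
proof (induction w1 arbitrary: u w2)
  case Nil thus ?case by simp
next
  case (Cons e w1)
  then obtain e' w2' where w2: "w2 = e' # w2'" by (cases w2) auto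
  from Cons.prems have "e = e'" using assms unfolding deterministic_def w2 is_walk_Cons by auto
  with Cons show ?case unfolding w2 is_walk_Cons by auto
qed

lemma cp_props:
  assumes "finite E" "\<forall>e\<in>E. P e > 0" "e \<in> E"
  shows "cond_prob E sg P e > 0" "cond_prob E sg P e \<le> 1"
proof -
  have "P e \<le> stat_pi E sg P (sg e)" unfolding stat_pi_def
    by (rule member_le_sum) (use assms in auto)
  with assms show "cond_prob E sg P e > 0" "cond_prob E sg P e \<le> 1"
    unfolding cond_prob_def by auto
qed

lemma walks_sum:
  assumes "finite E" "\<forall>e\<in>E. P e > 0"
  shows "finite {w. length w = k \<and> (\<exists>v. is_walk E sg tu u v w)} \<and>
    (\<Sum>w\<in>{w. length w = k \<and> (\<exists>v. is_walk E sg tu u v w)}. prod_list (map (cond_prob E sg P) w)) \<le> 1"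
proof (induction k arbitrary: u)
  case 0
  have "{w. length w = 0 \<and> (\<exists>v. is_walk E sg tu u v w)} = {[]}" by (auto simp: is_walk_Nil)
  thus ?case by simp
next
  case (Suc k)
  let ?S = "\<lambda>k u. {w. length w = k \<and> (\<exists>v. is_walk E sg tu u v w)}"
  let ?g = "\<lambda>w. prod_list (map (cond_prob E sg P) w)"
  let ?A = "{e\<in>E. sg e = u}"
  have eq: "?S (Suc k) u = (\<lambda>(e,w). e#w) ` (SIGMA e:?A. ?S k (tu e))"
  proof (rule set_eqI, rule iffI)
    fix x assume "x \<in> ?S (Suc k) u"
    then obtain e w where "x = e#w" by (cases x) auto
    with \<open>x \<in> ?S (Suc k) u\<close> show "x \<in> (\<lambda>(e,w). e#w) ` (SIGMA e:?A. ?S k (tu e))"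
      by (auto simp: is_walk_Cons)
  qed (auto simp: is_walk_Cons)
  have fA: "finite ?A" using assms by auto
  have fin: "finite (SIGMA e:?A. ?S k (tu e))" using fA Suc by auto
  have inj: "inj_on (\<lambda>(e,w). e#w) (SIGMA e:?A. ?S k (tu e))" by (auto simp: inj_on_def)
  have "(\<Sum>w\<in>?S (Suc k) u. ?g w) = (\<Sum>(e,w)\<in>(SIGMA e:?A. ?S k (tu e)). ?g (e#w))"
    unfolding eq by (subst sum.reindex[OF inj]) (simp add: case_prod_unfold)
  also have "\<dots> = (\<Sum>e\<in>?A. \<Sum>w\<in>?S k (tu e). cond_prob E sg P e * ?g w)"
    using fA Suc by (subst sum.Sigma) auto
  also have "\<dots> = (\<Sum>e\<in>?A. cond_prob E sg P e * (\<Sum>w\<in>?S k (tu e). ?g w))"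
    by (simp add: sum_distrib_left)
  also have "\<dots> \<le> (\<Sum>e\<in>?A. cond_prob E sg P e)"
  proof (rule sum_mono)
    fix e assume "e \<in> ?A"
    hence "cond_prob E sg P e > 0" using cp_props[OF assms] by auto
    thus "cond_prob E sg P e * (\<Sum>w\<in>?S k (tu e). ?g w) \<le> cond_prob E sg P e"
      using Suc[of "tu e"] by (simp add: mult_left_le)
  qed
  also have "\<dots> = (\<Sum>e\<in>?A. P e) / stat_pi E sg P u"
    unfolding cond_prob_def by (simp add: sum_divide_distrib)
  also have "\<dots> \<le> 1" unfolding stat_pi_def
    by (cases "(\<Sum>e\<in>?A. P e) = 0") auto
  finally show ?case using eq fin by auto
qed

lemma g_powr:
  assumes "finite E" "\<forall>e\<in>E. P e > 0" "set w \<subseteq> E"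
  shows "prod_list (map (cond_prob E sg P) w) = 2 powr (\<Sum>e\<in>E. log 2 (cond_prob E sg P e) * real (count_list w e))"
  using assms(3)
proof (induction w)
  case Nil thus ?case by simp
next
  case (Cons a w)
  have a: "a \<in> E" using Cons by auto
  have pos: "cond_prob E sg P a > 0" using cp_props[OF assms(1,2) a] by auto
  have "(\<Sum>e\<in>E. log 2 (cond_prob E sg P e) * real (count_list (a#w) e))
      = (\<Sum>e\<in>E. log 2 (cond_prob E sg P e) * real (count_list w e)) + (\<Sum>e\<in>E. if e = a then log 2 (cond_prob E sg P e) else 0)"
    by (subst sum.distrib[symmetric]) (rule sum.cong, auto simp: algebra_simps)
  also have "\<dots> = (\<Sum>e\<in>E. log 2 (cond_prob E sg P e) * real (count_list w e)) + log 2 (cond_prob E sg P a)"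
    using a assms(1) by (simp add: sum.delta')
  finally show ?case using Cons pos by (simp add: powr_add)
qed
theorem claim2:
  fixes V :: "'v set" and E :: "'e set" and sg tu :: "'e \<Rightarrow> 'v"
    and L :: "'e \<Rightarrow> 'a::linorder" and \<Sigma> :: "'a set"
    and P :: "'e \<Rightarrow> real" and n :: nat and \<alpha> \<zeta> :: real and vroot :: 'v
  assumes "finite V" and "finite E" and "finite \<Sigma>"
    and "\<forall>e\<in>E. sg e \<in> V \<and> tu e \<in> V \<and> L e \<in> \<Sigma>"
    and "deterministic E sg L" and "lossless E sg tu L" and "primitive V E sg tu"
    and "\<forall>e\<in>E. P e > 0" and "(\<Sum>e\<in>E. P e) = 1"
    and "\<forall>u\<in>V. stat_pi E sg P u = (\<Sum>e\<in>{e\<in>E. tu e = u}. P e)"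
    and "n > 0" and "\<forall>e\<in>E. real n * P e \<in> \<int>"
    and "0 < \<alpha>" and "\<alpha> < 1"
    and "0 < \<zeta>" and "\<zeta> < (1 - \<alpha>) / \<alpha> * Min (P ` E)"
    and "vroot \<in> V"
    and "C_pool E sg tu L P n (nat \<lfloor>\<alpha> * real n\<rfloor>) \<zeta> vroot \<noteq> {}"
  shows "Max (code_prob E sg tu L P n (nat \<lfloor>\<alpha> * real n\<rfloor>) \<zeta> vroot
               ` C_pool E sg tu L P n (nat \<lfloor>\<alpha> * real n\<rfloor>) \<zeta> vroot)
         \<le> 2 powr (- 2 * \<alpha> * real n * \<zeta> * (\<Sum>e\<in>E. log 2 (cond_prob E sg P e)))
           / real (card (C_pool E sg tu L P n (nat \<lfloor>\<alpha> * real n\<rfloor>) \<zeta> vroot))"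
proof -
  define m where "m = nat \<lfloor>\<alpha> * real n\<rfloor>"
  define W where "W = typical_walks E sg tu P vroot m \<zeta>"
  define f where "f = (\<lambda>w. map L (w @ Phi E sg tu L P n vroot w))"
  define g where "g = (\<lambda>w. prod_list (map (cond_prob E sg P) w))"
  define l where "l = (\<lambda>e. log 2 (cond_prob E sg P e))"
  define R where "R = 2 powr (- 2 * \<alpha> * real n * \<zeta> * (\<Sum>e\<in>E. l e))"
  have fE: "finite E" and Ppos: "\<forall>e\<in>E. P e > 0" using assms by auto
  have C: "C_pool E sg tu L P n m \<zeta> vroot = f ` W"
    unfolding C_pool_def f_def W_def by simp
  have Wsub: "W \<subseteq> {w. length w = m \<and> (\<exists>v. is_walk E sg tu vroot v w)}"
    unfolding W_def typical_walks_def by auto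
  note ws = walks_sum[OF fE Ppos, of m sg tu vroot]
  have finW: "finite W" using Wsub ws finite_subset by blast
  have gnn: "g w \<ge> 0" if "set w \<subseteq> E" for w
    unfolding g_powr[OF fE Ppos that] g_def by simp
  have Wwalk: "set w \<subseteq> E" if "w \<in> W" for w
    using that unfolding W_def typical_walks_def is_walk_def by auto
  have sumW: "(\<Sum>w\<in>W. g w) \<le> 1"
  proof -
    have "(\<Sum>w\<in>W. g w) \<le> (\<Sum>w\<in>{w. length w = m \<and> (\<exists>v. is_walk E sg tu vroot v w)}. g w)"
      apply (rule sum_mono2)
      using ws Wsub apply auto[2]
      using gnn unfolding is_walk_def by auto
    thus ?thesis using ws unfolding g_def by simp
  qed
  have inj: "inj_on f W"
  proof (rule inj_onI)
    fix w1 w2 assume w: "w1 \<in> W" "w2 \<in> W" "f w1 = f w2"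
    hence len: "length w1 = m" "length w2 = m" unfolding W_def typical_walks_def by auto
    have "take m (f w1) = take m (f w2)" using w by simp
    hence "map L w1 = map L w2" unfolding f_def using len by simp
    moreover obtain v1 v2 where "is_walk E sg tu vroot v1 w1" "is_walk E sg tu vroot v2 w2"
      using w unfolding W_def typical_walks_def by auto
    ultimately show "w1 = w2" using walk_det[OF assms(5)] by blast
  qed
  have cpf: "code_prob E sg tu L P n m \<zeta> vroot (f w) = g w" if "w \<in> W" for w
  proof -
    have "(THE w'. w' \<in> W \<and> f w' = f w) = w"
      using that inj by (auto intro!: the_equality dest: inj_onD)
    thus ?thesis unfolding code_prob_def g_def by (simp add: W_def f_def)
  qed
  have mle: "real m \<le> \<alpha> * real n" unfolding m_def using assms(13)
    by simp
  have key: "g w1 \<le> R * g w2" if "w1 \<in> W" "w2 \<in> W" for w1 w2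
  proof -
    have trm: "l e * real (count_list w1 e) \<le> - 2 * \<alpha> * real n * \<zeta> * l e + l e * real (count_list w2 e)"
      if e: "e \<in> E" for e
    proof -
      have le0: "l e \<le> 0" unfolding l_def using cp_props[OF fE Ppos e, where sg=sg] by simp
      have "real (count_list w1 e) - real (count_list w2 e) \<ge> - 2 * real m * \<zeta>"
      proof (cases "m = 0")
        case True
        hence "w1 = []" "w2 = []" using \<open>w1 \<in> W\<close> \<open>w2 \<in> W\<close> unfolding W_def typical_walks_def by auto
        thus ?thesis using True by simp
      next
        case False
        have a: "\<bar>real (count_list w1 e) / real m - P e\<bar> < \<zeta>" "\<bar>real (count_list w2 e) / real m - P e\<bar> < \<zeta>"
          using \<open>w1 \<in> W\<close> \<open>w2 \<in> W\<close> e unfolding W_def typical_walks_def by auto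
        have mp: "real m > 0" using False by simp
        have "real (count_list w1 e) / real m - real (count_list w2 e) / real m \<ge> - 2 * \<zeta>"
          using a by linarith
        hence "(real (count_list w1 e) - real (count_list w2 e)) / real m \<ge> - 2 * \<zeta>"
          by (simp add: diff_divide_distrib)
        thus ?thesis using mp by (simp add: pos_le_divide_eq algebra_simps)
      qed
      moreover have "- 2 * real m * \<zeta> \<ge> - 2 * \<alpha> * real n * \<zeta>"
        using mle assms(15) by (simp add: mult_right_mono)
      ultimately have "real (count_list w1 e) - real (count_list w2 e) + 2 * \<alpha> * real n * \<zeta> \<ge> 0" by linarith
      hence "l e * (real (count_list w1 e) - real (count_list w2 e) + 2 * \<alpha> * real n * \<zeta>) \<le> 0"
        using le0 by (simp add: mult_nonpos_nonneg)
      thus ?thesis by (simp add: algebra_simps)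
    qed
    have "(\<Sum>e\<in>E. l e * real (count_list w1 e)) \<le> (\<Sum>e\<in>E. - 2 * \<alpha> * real n * \<zeta> * l e + l e * real (count_list w2 e))"
      by (rule sum_mono) (rule trm)
    also have "\<dots> = - 2 * \<alpha> * real n * \<zeta> * (\<Sum>e\<in>E. l e) + (\<Sum>e\<in>E. l e * real (count_list w2 e))"
      by (simp only: sum.distrib sum_distrib_left mult.assoc)
    finally have "2 powr (\<Sum>e\<in>E. l e * real (count_list w1 e)) \<le> 2 powr (- 2 * \<alpha> * real n * \<zeta> * (\<Sum>e\<in>E. l e) + (\<Sum>e\<in>E. l e * real (count_list w2 e)))"
      by simp
    moreover have "g w1 = 2 powr (\<Sum>e\<in>E. l e * real (count_list w1 e))"
      unfolding g_def l_def using g_powr[OF fE Ppos Wwalk[OF that(1)], where sg=sg] .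
    moreover have "g w2 = 2 powr (\<Sum>e\<in>E. l e * real (count_list w2 e))"
      unfolding g_def l_def using g_powr[OF fE Ppos Wwalk[OF that(2)], where sg=sg] .
    ultimately show ?thesis unfolding R_def by (simp add: powr_add[symmetric] del: powr_add)
  qed
  have Wne: "W \<noteq> {}" using assms(18) C m_def by auto
  have cardpos: "card W > 0" using Wne finW by (simp add: card_gt_0_iff)
  have Rpos: "R \<ge> 0" unfolding R_def by simp
  have bound: "g w \<le> R / real (card W)" if w: "w \<in> W" for w
  proof -
    have "real (card W) * g w = (\<Sum>w'\<in>W. g w)" by simp
    also have "\<dots> \<le> (\<Sum>w'\<in>W. R * g w')" by (rule sum_mono) (rule key[OF w])
    also have "\<dots> = R * (\<Sum>w'\<in>W. g w')" by (simp add: sum_distrib_left)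
    also have "\<dots> \<le> R" using sumW Rpos by (simp add: mult_left_le)
    finally show ?thesis using cardpos by (simp add: pos_le_divide_eq mult.commute)
  qed
  have img: "code_prob E sg tu L P n m \<zeta> vroot ` f ` W = g ` W"
    using cpf by (force simp: image_image)
  have "Max (g ` W) \<le> R / real (card W)"
    using finW Wne bound by (simp add: Max_le_iff)
  moreover have "card (f ` W) = card W" using inj by (simp add: card_image)
  ultimately show ?thesis unfolding m_def[symmetric] C img R_def l_def by simp
qed
end
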